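(* Let $\succcurlyeq$ be a preference relation on the set $\mathcal{B}$ of bets over a propositional language $\mathcal{L}$ satisfying Non-Triviality, Objective Expected Utility and Inclusion/Exclusion. Let $\mathcal{T}$ be a theory and let $\mathcal{S}\subseteq\mathcal{T}$ be the unique largest sub-theory such that $\succcurlyeq$ satisfies $\mathcal{S}$-Implication (i.e. $\succcurlyeq$ satisfies $\mathcal{S}$-Implication and fails $\mathcal{S}'$-Implication for every $\mathcal{S}\subsetneq\mathcal{S}'\subseteq\mathcal{T}$). Then $\mathcal{S}=\{\phi\in\mathcal{T}\mid b_\phi\succcurlyeq b_{\mathbf{T}}\}$.
   Context: Let $\mathbb{P}$ be a set of propositional variables containing distinguished $\mathbf{T}$, $\mathbf{F}$, and $\mathcal{L}$ the language generated by $\neg,\land,\lor$; $\phi\implies\psi$ means $\psi$ is deducible from $\phi$ in classical propositional logic. A theory is a set $\mathcal{T}\subseteq\mathcal{L}$ closed under logical implication with $\mathbf{F}\notin\mathcal{T}$. For a set $\mathcal{S}$ of statements, $\phi\overset{\mathcal{S}}{\implies}\psi$ means $\psi$ is deducible from $\phi$ together with the elements of $\mathcal{S}$. A bet is a finitely supported $b:\mathcal{L}\to[0,1]$ summing to $1$; $b_\phi$ is the point-mass bet on $\phi$; the set $\mathcal{B}$ of bets is a mixture space under pointwise mixtures, and $\{\alpha_1 b_{\phi_1},\dots,\alpha_k b_{\phi_k}\}$ denotes the bet assigning weight $\alpha_i$ to $\phi_i$ (weights on coinciding statements added). Non-Triviality: $b_{\mathbf{T}}\succcurlyeq b_\phi\succcurlyeq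 b_{\mathbf{F}}$ for all $\phi$ and $b_{\mathbf{T}}\succ b_{\mathbf{F}}$. Objective Expected Utility: $\succcurlyeq$ is complete, transitive, Archimedean and satisfies Independence. $\mathcal{S}$-Implication: $\phi\overset{\mathcal{S}}{\implies}\psi$ implies $b_\psi\succcurlyeq b_\phi$. Inclusion/Exclusion: for any $\phi_1,\dots,\phi_n\in\mathcal{L}$ and $\psi$ with $\phi_i\implies\psi$ for all $i$, letting $E$ and $O$ be the collections of nonempty subsets of $\{1,\dots,n\}$ of even and odd cardinality respectively, $\phi_I=\bigwedge_{i\in I}\phi_i$, and $m=\max\{|E|+1,|O|\}$, we have $\{\tfrac1m b_\psi,\ \tfrac1m b_{\phi_I}\ (I\in E),\ (1-\tfrac{|E|+1}{m})b_{\mathbf{F}}\}\succcurlyeq\{\tfrac1m b_{\phi_I}\ (I\in O),\ (1-\tfrac{|O|}{m})b_{\mathbf{F}}\}$. *)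

theory Defs
  imports Main Complex_Main
begin

text \<open>Formulas over propositional variables of type 'p, with the distinguished
  variables T and F rendered as the constructors TT and FF.\<close>
datatype 'p form = Var 'p | TT | FF | Neg "'p form" | Conj "'p form" "'p form" | Disj "'p form" "'p form"

fun holds :: "('p \<Rightarrow> bool) \<Rightarrow> 'p form \<Rightarrow> bool" where
  "holds v (Var p) = v p"
| "holds v TT = True"
| "holds v FF = False"
| "holds v (Neg a) = (\<not> holds v a)"
| "holds v (Conj a b) = (holds v a \<and> holds v b)"
| "holds v (Disj a b) = (holds v a \<or> holds v b)"

text \<open>Classical consequence from a set of premises (by completeness and compactness
  this coincides with deducibility in classical propositional logic).\<close>
definition entails :: "'p form set \<Rightarrow> 'p form \<Rightarrow> bool" where
  "entails \<Gamma> \<psi> \<longleftrightarrow> (\<forall>v. (\<forall>\<gamma>\<in>\<Gamma>. holds v \<gamma>) \<longrightarrow> holds v \<psi>)"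

definition implies :: "'p form \<Rightarrow> 'p form \<Rightarrow> bool" where
  "implies \<phi> \<psi> \<longleftrightarrow> entails {\<phi>} \<psi>"

definition implies_from :: "'p form set \<Rightarrow> 'p form \<Rightarrow> 'p form \<Rightarrow> bool" where
  "implies_from S \<phi> \<psi> \<longleftrightarrow> entails (insert \<phi> S) \<psi>"

definition is_theory :: "'p form set \<Rightarrow> bool" where
  "is_theory \<T> \<longleftrightarrow> (\<forall>\<psi>. entails \<T> \<psi> \<longrightarrow> \<psi> \<in> \<T>) \<and> FF \<notin> \<T>"

fun big_conj :: "'p form list \<Rightarrow> 'p form" where
  "big_conj [] = TT"
| "big_conj [a] = a"
| "big_conj (a # as) = Conj a (big_conj as)"

type_synonym 'p bet = "'p form \<Rightarrow> real"

definition is_bet :: "'p bet \<Rightarrow> bool" where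
  "is_bet b \<longleftrightarrow> finite {\<phi>. b \<phi> \<noteq> 0} \<and> (\<forall>\<phi>. 0 \<le> b \<phi> \<and> b \<phi> \<le> 1)
     \<and> (\<Sum>\<phi>\<in>{\<phi>. b \<phi> \<noteq> 0}. b \<phi>) = 1"

definition Bets :: "'p bet set" where
  "Bets = {b. is_bet b}"

definition pt :: "'p form \<Rightarrow> 'p bet" where
  "pt \<phi> = (\<lambda>\<chi>. if \<chi> = \<phi> then 1 else 0)"

definition mix :: "real \<Rightarrow> 'p bet \<Rightarrow> 'p bet \<Rightarrow> 'p bet" where
  "mix \<alpha> p q = (\<lambda>\<chi>. \<alpha> * p \<chi> + (1 - \<alpha>) * q \<chi>)"

definition strict :: "('p bet \<Rightarrow> 'p bet \<Rightarrow> bool) \<Rightarrow> 'p bet \<Rightarrow> 'p bet \<Rightarrow> bool" where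
  "strict R p q \<longleftrightarrow> R p q \<and> \<not> R q p"

definition non_triviality :: "('p bet \<Rightarrow> 'p bet \<Rightarrow> bool) \<Rightarrow> bool" where
  "non_triviality R \<longleftrightarrow> (\<forall>\<phi>. R (pt TT) (pt \<phi>) \<and> R (pt \<phi>) (pt FF)) \<and> strict R (pt TT) (pt FF)"

definition objective_EU :: "('p bet \<Rightarrow> 'p bet \<Rightarrow> bool) \<Rightarrow> bool" where
  "objective_EU R \<longleftrightarrow>
     (\<forall>p\<in>Bets. \<forall>q\<in>Bets. R p q \<or> R q p)
   \<and> (\<forall>p\<in>Bets. \<forall>q\<in>Bets. \<forall>r\<in>Bets. R p q \<longrightarrow> R q r \<longrightarrow> R p r)
   \<and> (\<forall>p\<in>Bets. \<forall>q\<in>Bets. \<forall>r\<in>Bets. strict R p q \<longrightarrow> strict R q r \<longrightarrow>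
        (\<exists>\<alpha> \<beta>. 0 < \<alpha> \<and> \<alpha> < 1 \<and> 0 < \<beta> \<and> \<beta> < 1 \<and>
            strict R (mix \<alpha> p r) q \<and> strict R q (mix \<beta> p r)))
   \<and> (\<forall>p\<in>Bets. \<forall>q\<in>Bets. \<forall>r\<in>Bets. \<forall>\<alpha>. 0 < \<alpha> \<longrightarrow> \<alpha> \<le> 1 \<longrightarrow>
        (R p q \<longleftrightarrow> R (mix \<alpha> p r) (mix \<alpha> q r)))"

definition S_implication :: "('p bet \<Rightarrow> 'p bet \<Rightarrow> bool) \<Rightarrow> 'p form set \<Rightarrow> bool" where
  "S_implication R S \<longleftrightarrow> (\<forall>\<phi> \<psi>. implies_from S \<phi> \<psi> \<longrightarrow> R (pt \<psi>) (pt \<phi>))"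

definition conj_of :: "(nat \<Rightarrow> 'p form) \<Rightarrow> nat set \<Rightarrow> 'p form" where
  "conj_of \<phi> I = big_conj (map \<phi> (sorted_list_of_set I))"

definition inclusion_exclusion :: "('p bet \<Rightarrow> 'p bet \<Rightarrow> bool) \<Rightarrow> bool" where
  "inclusion_exclusion R \<longleftrightarrow>
    (\<forall>(n::nat) (\<phi>::nat \<Rightarrow> 'p form) \<psi>. (\<forall>i<n. implies (\<phi> i) \<psi>) \<longrightarrow>
      (let E = {I. I \<subseteq> {0..<n} \<and> I \<noteq> {} \<and> even (card I)};
           Od = {I. I \<subseteq> {0..<n} \<and> I \<noteq> {} \<and> odd (card I)};
           m = real (max (card E + 1) (card Od))
       in R (\<lambda>\<chi>. (1/m) * pt \<psi> \<chi> + (\<Sum>I\<in>E. (1/m) * pt (conj_of \<phi> I) \<chi>)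
                   + (1 - (card E + 1) / m) * pt FF \<chi>)
            (\<lambda>\<chi>. (\<Sum>I\<in>Od. (1/m) * pt (conj_of \<phi> I) \<chi>)
                   + (1 - card Od / m) * pt FF \<chi>)))"

end

theory Submission
  imports Defs
begin

lemma pt_Bets: "pt x \<in> Bets"
proof -
  have "{\<phi>. pt x \<phi> \<noteq> 0} = {x}" by (auto simp: pt_def)
  then show ?thesis by (auto simp: Bets_def is_bet_def pt_def)
qed

lemma bet_sum_superset:
  assumes "is_bet p" "finite U" "{\<phi>. p \<phi> \<noteq> 0} \<subseteq> U"
  shows "(\<Sum>\<phi>\<in>U. p \<phi>) = 1"
proof -
  have "(\<Sum>\<phi>\<in>U. p \<phi>) = (\<Sum>\<phi>\<in>{\<phi>. p \<phi> \<noteq> 0}. p \<phi>)"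
    using assms by (intro sum.mono_neutral_right) auto
  then show ?thesis using assms(1) by (simp add: is_bet_def)
qed

lemma mix_Bets:
  assumes "p \<in> Bets" "q \<in> Bets" "0 \<le> a" "a \<le> 1"
  shows "mix a p q \<in> Bets"
proof -
  let ?U = "{\<phi>. p \<phi> \<noteq> 0} \<union> {\<phi>. q \<phi> \<noteq> 0}"
  have bp: "is_bet p" and bq: "is_bet q" using assms by (auto simp: Bets_def)
  have fU: "finite ?U" using bp bq by (auto simp: is_bet_def)
  have sub: "{\<phi>. mix a p q \<phi> \<noteq> 0} \<subseteq> ?U" by (auto simp: mix_def)
  have fin: "finite {\<phi>. mix a p q \<phi> \<noteq> 0}" using finite_subset[OF sub fU] .
  have rng: "\<forall>\<phi>. 0 \<le> mix a p q \<phi> \<and> mix a p q \<phi> \<le> 1"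
  proof
    fix \<phi>
    have "0 \<le> p \<phi>" "p \<phi> \<le> 1" "0 \<le> q \<phi>" "q \<phi> \<le> 1" using bp bq by (auto simp: is_bet_def)
    moreover have "a * p \<phi> \<le> a" "(1-a) * q \<phi> \<le> 1 - a"
      using calculation assms(3,4) by (auto intro: mult_left_le)
    ultimately show "0 \<le> mix a p q \<phi> \<and> mix a p q \<phi> \<le> 1"
      using assms(3,4) by (auto simp: mix_def)
  qed
  have "(\<Sum>\<phi>\<in>{\<phi>. mix a p q \<phi> \<noteq> 0}. mix a p q \<phi>) = (\<Sum>\<phi>\<in>?U. mix a p q \<phi>)"
    using fU sub by (intro sum.mono_neutral_left) auto
  also have "\<dots> = a * (\<Sum>\<phi>\<in>?U. p \<phi>) + (1-a) * (\<Sum>\<phi>\<in>?U. q \<phi>)"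
    by (simp add: mix_def sum.distrib sum_distrib_left)
  also have "\<dots> = 1"
    using bet_sum_superset[OF bp fU] bet_sum_superset[OF bq fU] by auto
  finally show ?thesis using fin rng by (simp add: Bets_def is_bet_def)
qed

lemma subsets01: "(I \<subseteq> {0..<2::nat}) \<longleftrightarrow> I = {} \<or> I = {0} \<or> I = {1} \<or> I = {0,1}"
proof
  assume h: "I \<subseteq> {0..<2::nat}"
  have "I \<subseteq> {0,1}" using h by auto
  then show "I = {} \<or> I = {0} \<or> I = {1} \<or> I = {0,1}"
    by (cases "0 \<in> I"; cases "1 \<in> I") auto
qed auto

lemma key:
  assumes NT: "non_triviality R" and EU: "objective_EU R" and IE: "inclusion_exclusion R"
    and top: "R (pt f0) (pt TT)"
  shows "R (pt (Conj f f0)) (pt f)"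
proof -
  let ?ph = "\<lambda>i::nat. if i = 0 then f else f0"
  let ?D = "Disj f f0"
  have imp: "\<forall>i<2. implies (?ph i) ?D" by (auto simp: implies_def entails_def)
  have E: "{I. I \<subseteq> {0..<2} \<and> I \<noteq> {} \<and> even (card I)} = {{0,1::nat}}"
    by (auto simp: subsets01)
  have O: "{I. I \<subseteq> {0..<2} \<and> I \<noteq> {} \<and> odd (card I)} = {{0},{1::nat}}"
    by (auto simp: subsets01)
  have c01: "conj_of ?ph {0,1} = Conj f f0" by (simp add: conj_of_def)
  have c0: "conj_of ?ph {0} = f" by (simp add: conj_of_def)
  have c1: "conj_of ?ph {1} = f0" by (simp add: conj_of_def)
  have inst: "let E = {I. I \<subseteq> {0..<2} \<and> I \<noteq> {} \<and> even (card I)};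
           Od = {I. I \<subseteq> {0..<2} \<and> I \<noteq> {} \<and> odd (card I)};
           m = real (max (card E + 1) (card Od))
       in R (\<lambda>\<chi>. (1/m) * pt ?D \<chi> + (\<Sum>I\<in>E. (1/m) * pt (conj_of ?ph I) \<chi>)
                   + (1 - (card E + 1) / m) * pt FF \<chi>)
            (\<lambda>\<chi>. (\<Sum>I\<in>Od. (1/m) * pt (conj_of ?ph I) \<chi>)
                   + (1 - card Od / m) * pt FF \<chi>)"
    by (rule mp[OF spec[OF spec[OF spec[OF IE[unfolded inclusion_exclusion_def], of 2], of ?ph], of ?D] imp])
  have "R (\<lambda>\<chi>. (1/2) * pt ?D \<chi> + (1/2) * pt (Conj f f0) \<chi>)
          (\<lambda>\<chi>. (1/2) * pt f \<chi> + (1/2) * pt f0 \<chi>)"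
    using inst unfolding Let_def E O using c01 c0 c1 by simp
  then have AB: "R (mix (1/2) (pt ?D) (pt (Conj f f0))) (mix (1/2) (pt f0) (pt f))"
    by (simp add: mix_def add.commute)
  have half: "(0::real) < 1/2" "(1/2::real) \<le> 1" by auto
  have hb: "(0::real) \<le> 1/2" by simp
  have trans: "\<And>p q r. p \<in> Bets \<Longrightarrow> q \<in> Bets \<Longrightarrow> r \<in> Bets \<Longrightarrow> R p q \<Longrightarrow> R q r \<Longrightarrow> R p r"
    using EU unfolding objective_EU_def by blast
  have ind: "\<And>p q r a. p \<in> Bets \<Longrightarrow> q \<in> Bets \<Longrightarrow> r \<in> Bets \<Longrightarrow> 0 < a \<Longrightarrow> a \<le> 1 \<Longrightarrow>
      R p q \<longleftrightarrow> R (mix a p r) (mix a q r)"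
    using EU unfolding objective_EU_def by blast
  have "R (pt TT) (pt ?D)" using NT by (simp add: non_triviality_def)
  then have "R (pt f0) (pt ?D)" using trans[OF pt_Bets pt_Bets pt_Bets top] by blast
  then have "R (mix (1/2) (pt f0) (pt (Conj f f0))) (mix (1/2) (pt ?D) (pt (Conj f f0)))"
    using ind[OF pt_Bets pt_Bets pt_Bets half] by blast
  then have "R (mix (1/2) (pt f0) (pt (Conj f f0))) (mix (1/2) (pt f0) (pt f))"
    using trans[OF mix_Bets[OF pt_Bets pt_Bets hb half(2)] mix_Bets[OF pt_Bets pt_Bets hb half(2)]
        mix_Bets[OF pt_Bets pt_Bets hb half(2)]] AB by blast
  moreover have "mix (1/2) (pt f0) (pt (Conj f f0)) = mix (1/2) (pt (Conj f f0)) (pt f0)"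
    "mix (1/2) (pt f0) (pt f) = mix (1/2) (pt f) (pt f0)"
    by (auto simp: mix_def)
  ultimately show ?thesis using ind[OF pt_Bets pt_Bets pt_Bets half] by simp
qed

theorem proposition6:
  fixes R :: "'p bet \<Rightarrow> 'p bet \<Rightarrow> bool" and \<T> S :: "'p form set"
  assumes "non_triviality R" and "objective_EU R" and "inclusion_exclusion R"
    and "is_theory \<T>"
    and "is_theory S" and "S \<subseteq> \<T>"
    and "S_implication R S"
    and "\<forall>S'. S \<subset> S' \<and> S' \<subseteq> \<T> \<longrightarrow> \<not> S_implication R S'"
  shows "S = {\<phi> \<in> \<T>. R (pt \<phi>) (pt TT)}"
proof
  show "S \<subseteq> {\<phi> \<in> \<T>. R (pt \<phi>) (pt TT)}"
  proof
    fix x assume "x \<in> S"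
    then have "implies_from S TT x" by (auto simp: implies_from_def entails_def)
    then show "x \<in> {\<phi> \<in> \<T>. R (pt \<phi>) (pt TT)}" using assms(6,7) \<open>x \<in> S\<close>
      by (auto simp: S_implication_def)
  qed
next
  show "{\<phi> \<in> \<T>. R (pt \<phi>) (pt TT)} \<subseteq> S"
  proof (rule ccontr)
    assume "\<not> ?thesis"
    then obtain f0 where f0: "f0 \<in> \<T>" "R (pt f0) (pt TT)" "f0 \<notin> S" by auto
    define S2 where "S2 = {\<psi>. entails (insert f0 S) \<psi>}"
    have "S \<subset> S2" using f0(3) by (auto simp: S2_def entails_def)
    moreover have "S2 \<subseteq> \<T>"
    proof
      fix x assume "x \<in> S2"
      then have "entails \<T> x" using f0(1) assms(6) by (auto simp: S2_def entails_def)
      then show "x \<in> \<T>" using assms(4) by (simp add: is_theory_def)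
    qed
    moreover have "S_implication R S2"
      unfolding S_implication_def
    proof (intro allI impI)
      fix f g assume "implies_from S2 f g"
      then have "implies_from S (Conj f f0) g"
        by (auto simp: implies_from_def entails_def S2_def)
      then have "R (pt g) (pt (Conj f f0))" using assms(7) by (simp add: S_implication_def)
      moreover have "R (pt (Conj f f0)) (pt f)" using key[OF assms(1-3) f0(2)] .
      ultimately show "R (pt g) (pt f)"
        using assms(2) pt_Bets unfolding objective_EU_def by blast
    qed
    ultimately show False using assms(8) by blast
  qed
qed

end
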